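(* Let $\mathcal{H}_A,\mathcal{H}_B,\mathcal{H}_C$ be finite-dimensional Hilbert spaces with fixed reference bases of $\mathcal{H}_A$ and $\mathcal{H}_B$ (and the product basis on $\mathcal{H}_A\otimes\mathcal{H}_B$). For every state $\rho_{ABC}$ on $\mathcal{H}_A\otimes\mathcal{H}_B\otimes\mathcal{H}_C$ with reduced states $\rho_{AC},\rho_{BC}$, $$C^{AB|C}_f(\rho_{ABC})\geq C^{A|BC}_f(\rho_{ABC})+C^{B|C}_f(\rho_{BC}),$$ and consequently $$C^{AB|C}_f(\rho_{ABC})\geq C^{A|C}_f(\rho_{AC})+C^{B|C}_f(\rho_{BC}).$$
   Context: $S$ is the von Neumann entropy. For a bipartite split $X|Y$ where $X$ has a fixed reference basis $\{|k\rangle_X\}$, $\Delta_X(\rho)=\sum_k(|k\rangle\langle k|_X\otimes I_Y)\rho(|k\rangle\langle k|_X\otimes I_Y)$. The IQ coherence of formation is $C^{X|Y}_f(\rho_{XY})=\min\sum_ip_iS(\Delta_X(|\psi_i\rangle\langle\psi_i|_{XY}))$, minimized over all pure-state decompositions $\rho_{XY}=\sum_ip_i|\psi_i\rangle\langle\psi_i|_{XY}$. *)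

theory Defs
  imports "Jordan_Normal_Form.Char_Poly"
begin

text \<open>A composite system with local dimensions d1, d2 is indexed by i = i1 * d2 + i2
(Kronecker / product-basis ordering).\<close>

definition density_mat :: "nat \<Rightarrow> complex mat \<Rightarrow> bool" where
  "density_mat n \<rho> \<longleftrightarrow> \<rho> \<in> carrier_mat n n
     \<and> (\<forall>i<n. \<forall>j<n. \<rho> $$ (j, i) = cnj (\<rho> $$ (i, j)))
     \<and> (\<forall>v \<in> carrier_vec n. 0 \<le> Re (\<Sum>i<n. \<Sum>j<n. cnj (v $ i) * \<rho> $$ (i, j) * v $ j))
     \<and> (\<Sum>i<n. \<rho> $$ (i, i)) = 1"

definition eigenvalue_list :: "complex mat \<Rightarrow> complex list" where
  "eigenvalue_list A = (SOME es. char_poly A = (\<Prod>a\<leftarrow>es. [:- a, 1:]))"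

definition eta :: "real \<Rightarrow> real" where
  "eta x = (if x > 0 then - x * log 2 x else 0)"

definition vn_entropy :: "complex mat \<Rightarrow> real" where
  "vn_entropy \<rho> = (\<Sum>a\<leftarrow>eigenvalue_list \<rho>. eta (Re a))"

definition proj :: "nat \<Rightarrow> complex vec \<Rightarrow> complex mat" where
  "proj n \<psi> = mat n n (\<lambda>(i, j). \<psi> $ i * cnj (\<psi> $ j))"

definition unit_vec :: "nat \<Rightarrow> complex vec \<Rightarrow> bool" where
  "unit_vec n \<psi> \<longleftrightarrow> \<psi> \<in> carrier_vec n \<and> (\<Sum>i<n. (cmod (\<psi> $ i))\<^sup>2) = 1"

definition pure_decomp :: "nat \<Rightarrow> complex mat \<Rightarrow> (real \<times> complex vec) list \<Rightarrow> bool" where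
  "pure_decomp n \<rho> ds \<longleftrightarrow>
     (\<forall>(p, \<psi>) \<in> set ds. 0 \<le> p \<and> unit_vec n \<psi>)
     \<and> (\<forall>i<n. \<forall>j<n. \<rho> $$ (i, j) = (\<Sum>(p, \<psi>)\<leftarrow>ds. complex_of_real p * \<psi> $ i * cnj (\<psi> $ j)))"

text \<open>Dephasing Delta_X on a bipartite system X|Y (dimensions dX, dY):
sum_k (|k><k|_X (x) I_Y) sigma (|k><k|_X (x) I_Y).\<close>
definition dephase :: "nat \<Rightarrow> nat \<Rightarrow> complex mat \<Rightarrow> complex mat" where
  "dephase dX dY \<sigma> = mat (dX * dY) (dX * dY)
     (\<lambda>(i, j). if i div dY = j div dY then \<sigma> $$ (i, j) else 0)"

definition coh_form :: "nat \<Rightarrow> nat \<Rightarrow> complex mat \<Rightarrow> real" where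
  "coh_form dX dY \<rho> = (INF ds \<in> {ds. pure_decomp (dX * dY) \<rho> ds}.
      (\<Sum>(p, \<psi>)\<leftarrow>ds. p * vn_entropy (dephase dX dY (proj (dX * dY) \<psi>))))"

text \<open>Partial traces on a tripartite system with dimensions d1, d2, d3
(index (i1 * d2 + i2) * d3 + i3).\<close>
definition ptrace_first :: "nat \<Rightarrow> nat \<Rightarrow> nat \<Rightarrow> complex mat \<Rightarrow> complex mat" where
  "ptrace_first d1 d2 d3 \<rho> = mat (d2 * d3) (d2 * d3)
     (\<lambda>(i, j). \<Sum>k<d1. \<rho> $$ (k * (d2 * d3) + i, k * (d2 * d3) + j))"

definition ptrace_mid :: "nat \<Rightarrow> nat \<Rightarrow> nat \<Rightarrow> complex mat \<Rightarrow> complex mat" where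
  "ptrace_mid d1 d2 d3 \<rho> = mat (d1 * d3) (d1 * d3)
     (\<lambda>(i, j). \<Sum>k<d2. \<rho> $$ (((i div d3) * d2 + k) * d3 + i mod d3,
                               ((j div d3) * d2 + k) * d3 + j mod d3))"

end

theory Submission
  imports Defs
begin



lemma const_poly_sum: "[:sum f S:] = (\<Sum>x\<in>S. [:f x:])"
proof (induct S rule: infinite_finite_induct)
  case (insert x F)
  have "[:f x + sum f F:] = [:f x:] + [:sum f F:]" by simp
  then show ?case using insert by simp
qed auto

lemma pCons_split: "pCons a (1::complex poly) = [:0,1:] + [:a:]"
  by (simp add: one_pCons)

lemma sylv_aux:
  fixes A :: "complex mat" and B :: "complex mat"
  assumes A: "A \<in> carrier_mat n m" and B: "B \<in> carrier_mat m n"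
  shows "char_poly (A * B) * monom 1 m = monom 1 n * char_poly (B * A)"
proof -
  let ?X = "[:0,1:] :: complex poly"
  define pA where "pA = map_mat (\<lambda>a. [:a:]) A"
  define pB where "pB = map_mat (\<lambda>a. [:a:]) B"
  have pA: "pA \<in> carrier_mat n m" and pB: "pB \<in> carrier_mat m n" using A B by (auto simp: pA_def pB_def)
  define G where "G = four_block_mat (?X \<cdot>\<^sub>m 1\<^sub>m n) pA pB (1\<^sub>m m)"
  define R1 where "R1 = four_block_mat (1\<^sub>m n) (0\<^sub>m n m) (- pB) (?X \<cdot>\<^sub>m 1\<^sub>m m)"
  define R2 where "R2 = four_block_mat (1\<^sub>m n) (- pA) (0\<^sub>m m n) (?X \<cdot>\<^sub>m 1\<^sub>m m)"
  have detX: "\<And>k. det (?X \<cdot>\<^sub>m 1\<^sub>m k) = monom 1 k"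
    by (simp add: det_smult monom_altdef)
  have cpAB: "char_poly_matrix (A * B) = ?X \<cdot>\<^sub>m 1\<^sub>m n + pA * (- pB)"
    using A B pA pB
    by (intro eq_matI) (auto simp: char_poly_matrix_def pA_def pB_def scalar_prod_def
         const_poly_sum[symmetric] pCons_split mult.commute)
  have cpBA: "char_poly_matrix (B * A) = pB * (- pA) + ?X \<cdot>\<^sub>m 1\<^sub>m m"
    using A B pA pB
    by (intro eq_matI) (auto simp: char_poly_matrix_def pA_def pB_def scalar_prod_def
         const_poly_sum[symmetric] pCons_split mult.commute)
  have GR1: "G * R1 = four_block_mat (char_poly_matrix (A * B)) (?X \<cdot>\<^sub>m pA) (0\<^sub>m m n) (?X \<cdot>\<^sub>m 1\<^sub>m m)"
    unfolding G_def R1_def cpAB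
    apply (subst mult_four_block_mat)
    apply (rule smult_carrier_mat, rule one_carrier_mat)
    apply (rule pA) apply (rule pB) apply (rule one_carrier_mat) apply (rule one_carrier_mat)
    apply (rule zero_carrier_mat) apply (rule uminus_carrier_mat, rule pB)
    apply (rule smult_carrier_mat, rule one_carrier_mat)
    apply (rule cong_four_block_mat)
    using pA pB apply auto
    done
  have GR2: "G * R2 = four_block_mat (?X \<cdot>\<^sub>m 1\<^sub>m n) (0\<^sub>m n m) pB (char_poly_matrix (B * A))"
    unfolding G_def R2_def cpBA
    apply (subst mult_four_block_mat)
    apply (rule smult_carrier_mat, rule one_carrier_mat)
    apply (rule pA) apply (rule pB) apply (rule one_carrier_mat) apply (rule one_carrier_mat)
    apply (rule uminus_carrier_mat, rule pA) apply (rule zero_carrier_mat)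
    apply (rule smult_carrier_mat, rule one_carrier_mat)
    apply (rule cong_four_block_mat)
    using pA pB apply auto
    done
  have Gc: "G \<in> carrier_mat (n+m) (n+m)" using pA pB by (simp add: G_def)
  have R1c: "R1 \<in> carrier_mat (n+m) (n+m)" using pA pB by (simp add: R1_def)
  have R2c: "R2 \<in> carrier_mat (n+m) (n+m)" using pA pB by (simp add: R2_def)
  have dR1: "det R1 = monom 1 m" unfolding R1_def
    by (subst det_four_block_mat_upper_right_zero[of _ n _ m]) (use pB detX in auto)
  have dR2: "det R2 = monom 1 m" unfolding R2_def
    by (subst det_four_block_mat_lower_left_zero[of _ n _ m]) (use pA detX in auto)
  have "det (G * R1) = char_poly (A * B) * monom 1 m"
    unfolding GR1 char_poly_def
    by (subst det_four_block_mat_lower_left_zero[of _ n _ m]) (use pA A B detX in auto)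
  hence "det G * monom 1 m = char_poly (A * B) * monom 1 m"
    unfolding det_mult[OF Gc R1c] dR1 .
  hence dG: "det G = char_poly (A * B)" by (simp add: monom_eq_0_iff)
  have "det (G * R2) = monom 1 n * char_poly (B * A)"
    unfolding GR2 char_poly_def
    by (subst det_four_block_mat_upper_right_zero[of _ n _ m]) (use pB A B detX in auto)
  hence "det G * monom 1 m = monom 1 n * char_poly (B * A)"
    unfolding det_mult[OF Gc R2c] dR2 .
  then show ?thesis using dG by simp
qed



lemma lin_factors_unique:
  fixes xs ys :: "complex list"
  assumes "(\<Prod>a\<leftarrow>xs. [:-a,1:]) = (\<Prod>a\<leftarrow>ys. [:-a,1:])"
  shows "mset xs = mset ys"
  using assms
proof (induct xs arbitrary: ys)
  case Nil
  then show ?case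
    using degree_linear_factors[of uminus ys] by (cases ys) auto
next
  case (Cons x xs)
  have "poly (\<Prod>a\<leftarrow>ys. [:-a,1:]) x = 0" using Cons(2)[symmetric] by simp
  then have "x \<in> set ys" by (auto simp: poly_prod_list prod_list_zero_iff)
  then obtain ys1 ys2 where ys: "ys = ys1 @ x # ys2" by (meson split_list)
  have "(\<Prod>a\<leftarrow>ys. [:-a,1:]) = [:-x,1:] * (\<Prod>a\<leftarrow>ys1 @ ys2. [:-a,1:])"
    unfolding ys by (simp only: map_append prod_list.append list.map prod_list.Cons mult.left_commute)
  then have "[:-x,1:] * (\<Prod>a\<leftarrow>xs. [:-a,1:]) = [:-x,1:] * (\<Prod>a\<leftarrow>ys1 @ ys2. [:-a,1:])"
    using Cons(2) by simp
  then have "(\<Prod>a\<leftarrow>xs. [:-a,1:]) = (\<Prod>a\<leftarrow>ys1 @ ys2. [:-a,1:])"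
    by (metis mult_left_cancel pCons_eq_0_iff one_neq_zero)
  from Cons(1)[OF this] show ?case unfolding ys by simp
qed

lemma vn_entropy_char_poly:
  assumes "char_poly A = (\<Prod>a\<leftarrow>es. [:-a,1:])"
  shows "vn_entropy A = (\<Sum>a\<leftarrow>es. eta (Re a))"
proof -
  have ex: "\<exists>es. char_poly A = (\<Prod>a\<leftarrow>es. [:-a,1:])" using assms by blast
  have "char_poly A = (\<Prod>a\<leftarrow>eigenvalue_list A. [:-a,1:])"
    unfolding eigenvalue_list_def by (rule someI_ex[OF ex])
  then have "mset (eigenvalue_list A) = mset es" using assms lin_factors_unique by metis
  then show ?thesis unfolding vn_entropy_def
    by (metis mset_map sum_mset_sum_list)
qed

lemma sum_prod_split:
  fixes f :: "nat \<Rightarrow> 'a::comm_monoid_add"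
  shows "(\<Sum>j<m*k. f j) = (\<Sum>a<m. \<Sum>b<k. f (a*k+b))"
proof -
  have "(\<Sum>j<m*k. f j) = (\<Sum>a<m. sum f {a*k..<a*k+k})" by (rule sum.nat_group[symmetric])
  also have "\<dots> = (\<Sum>a<m. \<Sum>b<k. f (a*k+b))"
  proof (rule sum.cong[OF refl])
    fix a
    have "sum f {a*k..<a*k+k} = sum f {0 + a*k..<k + a*k}" by (simp only: add_0 add.commute)
    also have "\<dots> = (\<Sum>b\<in>{0..<k}. f (b + a*k))" by (rule sum.shift_bounds_nat_ivl)
    also have "\<dots> = (\<Sum>b<k. f (a*k+b))" by (simp only: atLeast0LessThan add.commute)
    finally show "sum f {a*k..<a*k+k} = (\<Sum>b<k. f (a*k+b))" .
  qed
  finally show ?thesis .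
qed

lemma sum_block:
  fixes f :: "nat \<Rightarrow> 'a::comm_monoid_add"
  assumes x: "x < dX"
  shows "(\<Sum>j<dX*dY. if j div dY = x then f j else 0) = (\<Sum>y<dY. f (x*dY+y))"
proof (cases "dY = 0")
  case True
  then show ?thesis by simp
next
  case False
  have "(\<Sum>j<dX*dY. if j div dY = x then f j else 0) = (\<Sum>a<dX. \<Sum>y<dY. if (a*dY+y) div dY = x then f (a*dY+y) else 0)"
    by (rule sum_prod_split)
  also have "\<dots> = (\<Sum>a<dX. if a = x then (\<Sum>y<dY. f (x*dY+y)) else 0)"
  proof (rule sum.cong[OF refl])
    fix a
    have "(\<Sum>y<dY. if (a*dY+y) div dY = x then f (a*dY+y) else 0) = (\<Sum>y<dY. if a = x then f (x*dY+y) else 0)"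
      using False by (intro sum.cong refl) auto
    then show "(\<Sum>y<dY. if (a*dY+y) div dY = x then f (a*dY+y) else 0) = (if a = x then (\<Sum>y<dY. f (x*dY+y)) else 0)"
      by simp
  qed
  also have "\<dots> = (\<Sum>y<dY. f (x*dY+y))" using x by (simp add: sum.delta)
  finally show ?thesis .
qed




definition wt :: "nat \<Rightarrow> complex vec \<Rightarrow> nat \<Rightarrow> real" where
  "wt dY \<psi> x = (\<Sum>y<dY. (cmod (\<psi> $ (x*dY+y)))\<^sup>2)"

lemma div_lt: "(i::nat) < dX * dY \<Longrightarrow> i div dY < dX"
  by (cases "dY = 0") (auto simp: div_less_iff_less_mult)

lemma cnj_mult_self: "cnj z * z = complex_of_real ((cmod z)\<^sup>2)"
  by (subst mult.commute) (simp add: complex_mult_cnj cmod_power2)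

lemma ent_dephase:
  assumes dY: "0 < dY"
  shows "vn_entropy (dephase dX dY (proj (dX*dY) \<psi>)) = (\<Sum>x<dX. eta (wt dY \<psi> x))"
proof -
  let ?N = "dX*dY"
  define V where "V = mat ?N dX (\<lambda>(i,x). if i div dY = x then \<psi> $ i else 0)"
  define W where "W = mat dX ?N (\<lambda>(x,j). if j div dY = x then cnj (\<psi> $ j) else 0)"
  define s where "s x = (of_real (wt dY \<psi> x) :: complex)" for x
  have V: "V \<in> carrier_mat ?N dX" and W: "W \<in> carrier_mat dX ?N" by (auto simp: V_def W_def)
  have VW: "V * W = dephase dX dY (proj ?N \<psi>)"
  proof (rule eq_matI)
    fix i j assume i: "i < dim_row (dephase dX dY (proj ?N \<psi>))" and j: "j < dim_col (dephase dX dY (proj ?N \<psi>))"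
    then have i': "i < ?N" and j': "j < ?N" by (auto simp: dephase_def)
    have "(V * W) $$ (i,j) = (\<Sum>x<dX. (if i div dY = x then \<psi> $ i else 0) * (if j div dY = x then cnj (\<psi> $ j) else 0))"
      using i' j' by (simp add: V_def W_def scalar_prod_def atLeast0LessThan)
    also have "\<dots> = (\<Sum>x<dX. if x = i div dY then (if j div dY = i div dY then \<psi> $ i * cnj (\<psi> $ j) else 0) else 0)"
      by (intro sum.cong) auto
    also have "\<dots> = (if j div dY = i div dY then \<psi> $ i * cnj (\<psi> $ j) else 0)"
      using div_lt[OF i'] by (simp add: sum.delta)
    finally show "(V * W) $$ (i,j) = dephase dX dY (proj ?N \<psi>) $$ (i,j)"
      using i' j' by (auto simp: dephase_def proj_def)
  qed (auto simp: V_def W_def dephase_def)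
  define D where "D = mat dX dX (\<lambda>(x,z). if x = z then s x else 0)"
  have WV: "W * V = D"
  proof (rule eq_matI)
    fix x z assume x: "x < dim_row D" and z: "z < dim_col D"
    then have x': "x < dX" and z': "z < dX" by (auto simp: D_def)
    have "(W * V) $$ (x,z) = (\<Sum>j<?N. (if j div dY = x then cnj (\<psi> $ j) else 0) * (if j div dY = z then \<psi> $ j else 0))"
      using x' z' by (simp add: V_def W_def scalar_prod_def atLeast0LessThan)
    also have "\<dots> = (\<Sum>j<?N. if j div dY = x then (if x = z then cnj (\<psi> $ j) * \<psi> $ j else 0) else 0)"
      by (intro sum.cong) auto
    also have "\<dots> = (\<Sum>y<dY. (if x = z then cnj (\<psi> $ (x*dY+y)) * \<psi> $ (x*dY+y) else 0))"
      by (rule sum_block[OF x'])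
    also have "\<dots> = (if x = z then s x else 0)"
      by (auto simp: s_def wt_def cnj_mult_self)
    finally show "(W * V) $$ (x,z) = D $$ (x,z)" using x' z' by (simp add: D_def)
  qed (auto simp: V_def W_def D_def)
  have Res: "\<And>x. Re (s x) = wt dY \<psi> x" by (simp add: s_def)
  have Dc: "D \<in> carrier_mat dX dX" by (simp add: D_def)
  have ut: "upper_triangular D" by (auto simp: D_def upper_triangular_def)
  have cpD: "char_poly D = (\<Prod>a\<leftarrow>map s [0..<dX]. [:-a,1:])"
    unfolding char_poly_upper_triangular[OF Dc ut] diag_mat_def
    by (intro arg_cong[where f=prod_list]) (auto simp: D_def)
  have "char_poly (V * W) * monom 1 dX = monom 1 ?N * char_poly (W * V)"
    by (rule sylv_aux[OF V W])
  also have "monom 1 ?N = monom 1 (?N - dX) * (monom 1 dX :: complex poly)"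
  proof -
    have "?N \<ge> dX" using dY by simp
    then show ?thesis by (simp add: mult_monom)
  qed
  finally have "char_poly (V * W) * monom 1 dX = (monom 1 (?N - dX) * char_poly D) * monom 1 dX"
    unfolding WV by (simp add: ac_simps)
  then have "char_poly (V * W) = monom 1 (?N - dX) * char_poly D"
    by (simp add: monom_eq_0_iff)
  also have "monom 1 (?N - dX) = (\<Prod>a\<leftarrow>replicate (?N - dX) (0::complex). [:-a,1:])"
    by (simp add: monom_altdef prod_list_replicate)
  finally have cp: "char_poly (V * W) = (\<Prod>a\<leftarrow>replicate (?N - dX) 0 @ map s [0..<dX]. [:-a,1:])"
    unfolding cpD by simp
  have "vn_entropy (V * W) = (\<Sum>a\<leftarrow>replicate (?N - dX) 0 @ map s [0..<dX]. eta (Re a))"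
    by (rule vn_entropy_char_poly[OF cp])
  also have "\<dots> = (\<Sum>x<dX. eta (wt dY \<psi> x))"
    apply (simp add: eta_def comp_def sum_set_upt_conv_sum_list_nat[symmetric] atLeast0LessThan sum_list_replicate) by (simp only: Res)
  finally show ?thesis unfolding VW .
qed




lemma eta_0[simp]: "eta 0 = 0" by (simp add: eta_def)

lemma eta_nonneg: "0 \<le> x \<Longrightarrow> x \<le> 1 \<Longrightarrow> 0 \<le> eta x"
  by (auto simp: eta_def mult_nonneg_nonpos)

lemma eta_mult:
  assumes "0 \<le> x" "0 \<le> y"
  shows "eta (x*y) = y * eta x + x * eta y"
proof (cases "x = 0 \<or> y = 0")
  case False
  then have "x > 0" "y > 0" using assms by auto
  then show ?thesis by (simp add: eta_def log_mult algebra_simps)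
qed auto

lemma eta_split:
  fixes P :: "nat \<Rightarrow> real"
  assumes "\<And>b. b < k \<Longrightarrow> 0 \<le> P b"
  shows "(\<Sum>b<k. eta (P b)) = eta (\<Sum>b<k. P b) + (\<Sum>b<k. P b) * (\<Sum>b<k. eta (P b / (\<Sum>b<k. P b)))"
proof (cases "(\<Sum>b<k. P b) = 0")
  case True
  have "\<And>b. b < k \<Longrightarrow> P b = 0"
  proof -
    fix b assume "b < k"
    then show "P b = 0" using True assms sum_nonneg_eq_0_iff[of "{..<k}" P] by auto
  qed
  then show ?thesis using True by simp
next
  case False
  let ?W = "\<Sum>b<k. P b"
  have W: "?W > 0" using False assms by (metis less_eq_real_def lessThan_iff sum_nonneg)
  have "(\<Sum>b<k. eta (P b)) = (\<Sum>b<k. eta (?W * (P b / ?W)))" using W by simp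
  also have "\<dots> = (\<Sum>b<k. (P b / ?W) * eta ?W + ?W * eta (P b / ?W))"
    using W assms by (intro sum.cong refl eta_mult) auto
  also have "\<dots> = (\<Sum>b<k. P b) / ?W * eta ?W + ?W * (\<Sum>b<k. eta (P b / ?W))"
    by (simp add: sum.distrib sum_distrib_left sum_divide_distrib[symmetric] sum_distrib_right[symmetric])
  also have "\<dots> = eta ?W + ?W * (\<Sum>b<k. eta (P b / ?W))" using W by simp
  finally show ?thesis .
qed

lemma gibbs_term:
  fixes P Q R :: real
  assumes "0 \<le> P" "P \<le> Q" "P \<le> R"
  shows "Q * eta (P / Q) \<le> P * (- log 2 R) + (Q*R - P) / ln 2"
proof (cases "P = 0")
  case True
  then show ?thesis using assms by (simp add: eta_def)
next
  case False
  then have P: "P > 0" and Q: "Q > 0" and R: "R > 0" using assms by auto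
  define t where "t = Q*R/P"
  have t: "t > 0" using P Q R by (simp add: t_def)
  have "ln t \<le> t - 1" using t by (rule ln_le_minus_one)
  then have "P * ln t \<le> P * (t - 1)" using P by simp
  also have "P * (t - 1) = Q*R - P" using P by (simp add: t_def algebra_simps)
  finally have key: "P * ln t / ln 2 \<le> (Q*R - P) / ln 2" by (simp add: divide_right_mono)
  have "Q * eta (P / Q) = - P * log 2 (P / Q)" using P Q by (simp add: eta_def)
  also have "\<dots> = P * (- log 2 R) + P * ln t / ln 2"
    using P Q R by (simp add: t_def log_def ln_div ln_mult algebra_simps diff_divide_distrib add_divide_distrib)
  also have "\<dots> \<le> P * (- log 2 R) + (Q*R - P) / ln 2" using key by simp
  finally show ?thesis .
qed




definition nv :: "nat \<Rightarrow> (nat \<Rightarrow> complex) \<Rightarrow> real \<Rightarrow> complex vec" where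
  "nv n f w = (if w > 0 then vec n (\<lambda>i. f i / complex_of_real (sqrt w))
               else vec n (\<lambda>i. if i = 0 then 1 else 0))"

lemma nv_carrier[simp]: "nv n f w \<in> carrier_vec n"
  by (simp add: nv_def)

lemma nv_cmod:
  assumes "0 < w" "i < n"
  shows "(cmod (nv n f w $ i))\<^sup>2 = (cmod (f i))\<^sup>2 / w"
  using assms by (simp add: nv_def norm_divide power_divide)

lemma nv_unit:
  assumes n: "0 < n" and w: "w = (\<Sum>i<n. (cmod (f i))\<^sup>2)"
  shows "unit_vec n (nv n f w)"
proof (cases "w > 0")
  case True
  have "(\<Sum>i<n. (cmod (nv n f w $ i))\<^sup>2) = (\<Sum>i<n. (cmod (f i))\<^sup>2 / w)"
    using True by (intro sum.cong refl nv_cmod) auto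
  also have "\<dots> = 1" using True w by (simp add: sum_divide_distrib[symmetric])
  finally show ?thesis by (simp add: unit_vec_def)
next
  case False
  have "(\<Sum>i<n. (cmod (nv n f w $ i))\<^sup>2) = (\<Sum>i<n. if i = 0 then 1 else 0)"
    using False by (intro sum.cong refl) (auto simp: nv_def)
  also have "\<dots> = 1" using n by simp
  finally show ?thesis by (simp add: unit_vec_def)
qed

lemma nv_entry:
  assumes w: "w = (\<Sum>i<n. (cmod (f i))\<^sup>2)" and i: "i < n" and j: "j < n"
  shows "complex_of_real w * nv n f w $ i * cnj (nv n f w $ j) = f i * cnj (f j)"
proof (cases "w > 0")
  case True
  have "complex_of_real w = complex_of_real (sqrt w) * complex_of_real (sqrt w)"
    using True by (simp flip: of_real_mult)
  moreover have "complex_of_real (sqrt w) \<noteq> 0" using True by simp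
  ultimately show ?thesis using True i j by (simp add: nv_def field_simps)
next
  case False
  have "w = 0" using False w by (metis linorder_neqE_linordered_idom not_less sum_nonneg zero_le_power2)
  then have "\<And>i. i < n \<Longrightarrow> f i = 0" using w sum_nonneg_eq_0_iff[of "{..<n}" "\<lambda>i. (cmod (f i))\<^sup>2"] by auto
  then show ?thesis using i j \<open>w = 0\<close> by simp
qed




definition qf :: "nat \<Rightarrow> complex mat \<Rightarrow> (nat \<Rightarrow> complex) \<Rightarrow> complex" where
  "qf n \<rho> v = (\<Sum>i<n. \<Sum>j<n. cnj (v i) * \<rho> $$ (i, j) * v j)"

lemma sum_if_cond: "(\<Sum>j\<in>A. if P then f j else 0) = (if P then sum f A else 0)"
  by auto

lemma sum_ind_r: "(j::nat) < n \<Longrightarrow> (\<Sum>l<n. f l * (if l = j then 1 else 0)) = (f j :: 'a::semiring_1)"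
proof -
  assume j: "j < n"
  have "(\<Sum>l<n. f l * (if l = j then 1 else 0)) = (\<Sum>l<n. if l = j then f l else 0)"
    by (intro sum.cong) auto
  then show ?thesis using j by (simp add: sum.delta)
qed

lemma sum_ind_l: "(j::nat) < n \<Longrightarrow> (\<Sum>l<n. (if l = j then 1 else 0) * f l) = (f j :: 'a::semiring_1)"
proof -
  assume j: "j < n"
  have "(\<Sum>l<n. (if l = j then 1 else 0) * f l) = (\<Sum>l<n. if l = j then f l else 0)"
    by (intro sum.cong) auto
  then show ?thesis using j by (simp add: sum.delta)
qed

lemma qf_shift:
  assumes k: "k < n"
  shows "qf n \<rho> (\<lambda>i. v i + (if i = k then t else 0)) =
     qf n \<rho> v + cnj t * (\<Sum>j<n. \<rho> $$ (k, j) * v j) + (\<Sum>i<n. cnj (v i) * \<rho> $$ (i, k)) * t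
     + cnj t * \<rho> $$ (k, k) * t"
proof -
  have "qf n \<rho> (\<lambda>i. v i + (if i = k then t else 0)) =
    (\<Sum>i<n. \<Sum>j<n. cnj (v i) * \<rho> $$ (i, j) * v j + (if j = k then cnj (v i) * \<rho> $$ (i, k) * t else 0)
       + (if i = k then cnj t * \<rho> $$ (k, j) * v j else 0)
       + (if i = k then (if j = k then cnj t * \<rho> $$ (k, k) * t else 0) else 0))"
    unfolding qf_def by (intro sum.cong refl) (auto simp: algebra_simps)
  also have "\<dots> = qf n \<rho> v + (\<Sum>i<n. cnj (v i) * \<rho> $$ (i, k)) * t + cnj t * (\<Sum>j<n. \<rho> $$ (k, j) * v j)
       + cnj t * \<rho> $$ (k, k) * t"
    using k by (simp add: sum.distrib qf_def sum_distrib_left sum_distrib_right sum_if_cond ac_simps)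
  finally show ?thesis by (simp add: ac_simps)
qed

lemma qf_unit:
  assumes j: "j < n"
  shows "qf n \<rho> (\<lambda>i. if i = j then 1 else 0) = \<rho> $$ (j, j)"
proof -
  have "qf n \<rho> (\<lambda>i. if i = j then 1 else 0) = (\<Sum>i<n. (if i = j then 1 else 0) * \<rho> $$ (i, j))"
    unfolding qf_def
  proof (intro sum.cong refl)
    fix i
    have "(\<Sum>l<n. cnj (if i = j then 1 else 0) * \<rho> $$ (i, l) * (if l = j then 1 else 0))
        = cnj (if i = j then 1 else 0) * (\<Sum>l<n. \<rho> $$ (i, l) * (if l = j then 1 else 0))"
      by (simp add: sum_distrib_left mult.assoc)
    also have "\<dots> = (if i = j then 1 else 0) * \<rho> $$ (i, j)" by (simp only: sum_ind_r[OF j] complex_cnj_one complex_cnj_zero if_distrib[of cnj])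
    finally show "(\<Sum>l<n. cnj (if i = j then 1 else 0) * \<rho> $$ (i, l) * (if l = j then 1 else 0)) = (if i = j then 1 else 0) * \<rho> $$ (i, j)" .
  qed
  also have "\<dots> = \<rho> $$ (j, j)" by (rule sum_ind_l[OF j])
  finally show ?thesis .
qed

definition herm :: "nat \<Rightarrow> complex mat \<Rightarrow> bool" where
  "herm n \<rho> \<longleftrightarrow> (\<forall>i<n. \<forall>j<n. \<rho> $$ (j, i) = cnj (\<rho> $$ (i, j)))"

definition psd :: "nat \<Rightarrow> complex mat \<Rightarrow> bool" where
  "psd n \<rho> \<longleftrightarrow> (\<forall>v. 0 \<le> Re (qf n \<rho> v))"

lemma density_herm_psd:
  assumes "density_mat n \<rho>"
  shows "herm n \<rho>" "psd n \<rho>" "\<rho> \<in> carrier_mat n n"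
proof -
  show "herm n \<rho>" unfolding herm_def using assms unfolding density_mat_def by (rule conjunct1[OF conjunct2])
  show "\<rho> \<in> carrier_mat n n" using assms unfolding density_mat_def by (rule conjunct1)
  show "psd n \<rho>" unfolding psd_def
  proof
    fix v :: "nat \<Rightarrow> complex"
    have "vec n v \<in> carrier_vec n" by simp
    moreover have "\<forall>v \<in> carrier_vec n. 0 \<le> Re (\<Sum>i<n. \<Sum>j<n. cnj (v $ i) * \<rho> $$ (i, j) * v $ j)"
      using assms unfolding density_mat_def by (rule conjunct1[OF conjunct2[OF conjunct2]])
    ultimately have "0 \<le> Re (\<Sum>i<n. \<Sum>j<n. cnj (vec n v $ i) * \<rho> $$ (i, j) * vec n v $ j)"
      by (rule bspec[rotated])
    also have "(\<Sum>i<n. \<Sum>j<n. cnj (vec n v $ i) * \<rho> $$ (i, j) * vec n v $ j) = qf n \<rho> v"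
      unfolding qf_def by (intro sum.cong refl) auto
    finally show "0 \<le> Re (qf n \<rho> v)" .
  qed
qed

lemma zero_diag_row:
  assumes h: "herm n \<rho>" and p: "psd n \<rho>" and k: "k < n" and j: "j < n" and z: "\<rho> $$ (k, k) = 0"
  shows "\<rho> $$ (k, j) = 0"
proof (rule ccontr)
  assume c0: "\<rho> $$ (k, j) \<noteq> 0"
  let ?c = "\<rho> $$ (k, j)"
  have kj: "k \<noteq> j" using c0 z by auto
  define s where "s = (\<bar>Re (\<rho> $$ (j, j))\<bar> + 1) / (2 * (cmod ?c)\<^sup>2)"
  define a where "a = - complex_of_real s * ?c"
  have cpos: "(cmod ?c)\<^sup>2 > 0" using c0 by simp
  have v: "(\<lambda>i. (if i = j then 1 else 0) + (if i = k then a else 0)) = (\<lambda>i. if i = k then a else if i = j then 1 else 0)"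
    using kj by auto
  have "qf n \<rho> (\<lambda>i. (if i = j then 1 else 0) + (if i = k then a else 0)) =
     \<rho> $$ (j, j) + cnj a * ?c + \<rho> $$ (j, k) * a + cnj a * \<rho> $$ (k, k) * a"
  proof -
    have e1: "(\<Sum>l<n. \<rho> $$ (k, l) * (if l = j then 1 else 0)) = ?c"
      using j by (rule sum_ind_r)
    have e2: "(\<Sum>i<n. cnj (if i = j then 1 else 0) * \<rho> $$ (i, k)) = \<rho> $$ (j, k)"
    proof -
      have "(\<Sum>i<n. cnj (if i = j then 1 else 0) * \<rho> $$ (i, k)) = (\<Sum>i<n. (if i = j then 1 else 0) * \<rho> $$ (i, k))"
        by (intro sum.cong) auto
      then show ?thesis using sum_ind_l[OF j] by simp
    qed
    show ?thesis using qf_shift[OF k, of \<rho> "\<lambda>i. if i = j then 1 else 0" a] qf_unit[OF j, of \<rho>] e1 e2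
      by simp
  qed
  also have "\<rho> $$ (j, k) = cnj ?c" using h k j unfolding herm_def by blast
  finally have q0: "qf n \<rho> (\<lambda>i. (if i = j then 1 else 0) + (if i = k then a else 0)) =
     \<rho> $$ (j, j) + cnj a * ?c + cnj ?c * a + cnj a * \<rho> $$ (k, k) * a" .
  have cc: "?c * cnj ?c = (complex_of_real (cmod ?c))\<^sup>2"
    by (simp add: complex_norm_square[symmetric])
  have q: "qf n \<rho> (\<lambda>i. (if i = j then 1 else 0) + (if i = k then a else 0)) =
     \<rho> $$ (j, j) - 2 * complex_of_real (s * (cmod ?c)\<^sup>2)"
    unfolding q0 using z by (simp add: a_def cc algebra_simps)
  have "Re (qf n \<rho> (\<lambda>i. (if i = j then 1 else 0) + (if i = k then a else 0))) = Re (\<rho> $$ (j, j)) - (\<bar>Re (\<rho> $$ (j, j))\<bar> + 1)"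
    unfolding q using cpos by (simp add: s_def field_simps)
  also have "\<dots> < 0" by linarith
  finally show False using p unfolding psd_def by (metis not_less)
qed




lemma hermD: "herm n \<rho> \<Longrightarrow> i < n \<Longrightarrow> j < n \<Longrightarrow> \<rho> $$ (j, i) = cnj (\<rho> $$ (i, j))"
  unfolding herm_def by blast

lemma chol_step:
  assumes h: "herm n \<rho>" and p: "psd n \<rho>" and k: "k < n" and r: "\<rho> $$ (k, k) = complex_of_real r" and r0: "r > 0"
  defines "u \<equiv> (\<lambda>i. \<rho> $$ (i, k) / complex_of_real (sqrt r))"
  defines "\<rho>' \<equiv> mat n n (\<lambda>(i, j). \<rho> $$ (i, j) - u i * cnj (u j))"
  shows "herm n \<rho>'" "psd n \<rho>'" "\<And>j. j < n \<Longrightarrow> \<rho>' $$ (k, j) = 0" "\<And>i. i < n \<Longrightarrow> \<rho>' $$ (i, k) = 0"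
proof -
  have sr: "complex_of_real (sqrt r) * complex_of_real (sqrt r) = complex_of_real r"
    using r0 by (simp flip: of_real_mult)
  have sr0: "complex_of_real (sqrt r) \<noteq> 0" using r0 by simp
  have r0': "complex_of_real r \<noteq> 0" using r0 by simp
  show "herm n \<rho>'" unfolding herm_def
  proof (intro allI impI)
    fix i j assume "i < n" "j < n"
    then show "\<rho>' $$ (j, i) = cnj (\<rho>' $$ (i, j))" using hermD[OF h, of i j] by (simp add: \<rho>'_def)
  qed
  show "\<And>j. j < n \<Longrightarrow> \<rho>' $$ (k, j) = 0"
  proof -
    fix j assume j: "j < n"
    have "u k * cnj (u j) = \<rho> $$ (k, k) * cnj (\<rho> $$ (j, k)) / (complex_of_real (sqrt r) * complex_of_real (sqrt r))"
      by (simp add: u_def)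
    also have "\<dots> = \<rho> $$ (k, j)" unfolding sr r using hermD[OF h j k] r0' by simp
    finally show "\<rho>' $$ (k, j) = 0" using j k by (simp add: \<rho>'_def)
  qed
  then show "\<And>i. i < n \<Longrightarrow> \<rho>' $$ (i, k) = 0"
    using hermD[OF \<open>herm n \<rho>'\<close> k] by simp
  show "psd n \<rho>'" unfolding psd_def
  proof
    fix v
    define y where "y = (\<Sum>j<n. \<rho> $$ (k, j) * v j)"
    define t where "t = - y / complex_of_real r"
    have y2: "(\<Sum>i<n. cnj (v i) * \<rho> $$ (i, k)) = cnj y"
      unfolding y_def using hermD[OF h _ k] k by (auto intro!: sum.cong)
    have "qf n \<rho> (\<lambda>i. v i + (if i = k then t else 0)) = qf n \<rho> v + cnj t * y + cnj y * t + cnj t * complex_of_real r * t"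
      using qf_shift[OF k, of \<rho> v t] y2 r by (simp add: y_def)
    also have "\<dots> = qf n \<rho> v - y * cnj y / complex_of_real r"
      using r0' by (simp add: t_def field_simps)
    finally have w: "qf n \<rho> (\<lambda>i. v i + (if i = k then t else 0)) = qf n \<rho> v - y * cnj y / complex_of_real r" .
    have "qf n \<rho>' v = (\<Sum>i<n. \<Sum>j<n. cnj (v i) * \<rho> $$ (i, j) * v j - (cnj (v i) * u i) * (cnj (u j) * v j))"
      unfolding qf_def \<rho>'_def by (intro sum.cong refl) (auto simp: algebra_simps)
    also have "\<dots> = qf n \<rho> v - (\<Sum>i<n. cnj (v i) * u i) * (\<Sum>j<n. cnj (u j) * v j)"
      by (simp add: qf_def sum_subtractf sum_product)
    also have "(\<Sum>i<n. cnj (v i) * u i) = cnj y / complex_of_real (sqrt r)"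
      using y2 by (simp add: u_def sum_divide_distrib[symmetric] times_divide_eq_right)
    also have "(\<Sum>j<n. cnj (u j) * v j) = y / complex_of_real (sqrt r)"
      unfolding y_def u_def using h k
      by (auto simp: hermD[OF h _ k] sum_divide_distrib[symmetric] intro!: sum.cong)
    also have "cnj y / complex_of_real (sqrt r) * (y / complex_of_real (sqrt r)) = y * cnj y / complex_of_real r"
      by (simp add: sr[symmetric])
    finally have "qf n \<rho>' v = qf n \<rho> (\<lambda>i. v i + (if i = k then t else 0))" using w by simp
    then show "0 \<le> Re (qf n \<rho>' v)" using p unfolding psd_def by simp
  qed
qed




lemma chol_ind:
  assumes "n - k = m" "herm n \<rho>" "psd n \<rho>"
    "\<And>i j. i < n \<Longrightarrow> j < n \<Longrightarrow> i < k \<or> j < k \<Longrightarrow> \<rho> $$ (i, j) = 0"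
  shows "\<exists>ds. pure_decomp n \<rho> ds"
  using assms
proof (induct m arbitrary: \<rho> k)
  case 0
  then have "\<And>i j. i < n \<Longrightarrow> j < n \<Longrightarrow> \<rho> $$ (i, j) = 0" by auto
  then have "pure_decomp n \<rho> []" by (simp add: pure_decomp_def)
  then show ?case by blast
next
  case (Suc m)
  have k: "k < n" using Suc(2) by simp
  have m: "n - Suc k = m" using Suc(2) by simp
  show ?case
  proof (cases "\<rho> $$ (k, k) = 0")
    case True
    have row: "\<And>j. j < n \<Longrightarrow> \<rho> $$ (k, j) = 0"
      using zero_diag_row[OF Suc(3) Suc(4) k _ True] by blast
    have col: "\<And>i. i < n \<Longrightarrow> \<rho> $$ (i, k) = 0"
      using row hermD[OF Suc(3) k] by simp
    show ?thesis
    proof (rule Suc(1)[OF m Suc(3) Suc(4)])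
      fix i j assume "i < n" "j < n" "i < Suc k \<or> j < Suc k"
      then show "\<rho> $$ (i, j) = 0" using Suc(5) row col by (metis less_antisym)
    qed
  next
    case False
    define r where "r = Re (\<rho> $$ (k, k))"
    have real: "\<rho> $$ (k, k) = complex_of_real r"
    proof -
      have "\<rho> $$ (k, k) = cnj (\<rho> $$ (k, k))" using hermD[OF Suc(3) k k] by simp
      then show ?thesis unfolding r_def by (metis Reals_cnj_iff complex_is_Real_iff of_real_Re)
    qed
    have "0 \<le> Re (qf n \<rho> (\<lambda>i. if i = k then 1 else 0))" using Suc(4) unfolding psd_def by blast
    then have "0 \<le> r" using qf_unit[OF k] unfolding r_def by simp
    moreover have "r \<noteq> 0" using False real by auto
    ultimately have r0: "r > 0" by simp
    define u where "u = (\<lambda>i. \<rho> $$ (i, k) / complex_of_real (sqrt r))"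
    define \<rho>' where "\<rho>' = mat n n (\<lambda>(i, j). \<rho> $$ (i, j) - u i * cnj (u j))"
    have cs1: "herm n \<rho>'" "psd n \<rho>'" "\<And>j. j < n \<Longrightarrow> \<rho>' $$ (k, j) = 0" "\<And>i. i < n \<Longrightarrow> \<rho>' $$ (i, k) = 0"
      unfolding \<rho>'_def u_def using chol_step[OF Suc(3) Suc(4) k real r0] by auto
    note cs = cs1
    obtain ds where ds: "pure_decomp n \<rho>' ds"
    proof -
      have "\<exists>ds. pure_decomp n \<rho>' ds"
      proof (rule Suc(1)[OF m cs(1) cs(2)])
        fix i j assume ij: "i < n" "j < n" "i < Suc k \<or> j < Suc k"
        show "\<rho>' $$ (i, j) = 0"
        proof (cases "i = k \<or> j = k")
          case True then show ?thesis using cs(3) cs(4) ij by auto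
        next
          case False
          then have "i < k \<or> j < k" using ij by auto
          then have z: "\<rho> $$ (i, j) = 0" using Suc(5) ij by blast
          have "u i = 0 \<or> u j = 0"
            using \<open>i < k \<or> j < k\<close> Suc(5) ij k unfolding u_def by auto
          then show ?thesis using z ij by (auto simp: \<rho>'_def)
        qed
      qed
      then show ?thesis using that by blast
    qed
    define w where "w = (\<Sum>i<n. (cmod (u i))\<^sup>2)"
    have "pure_decomp n \<rho> ((w, nv n u w) # ds)"
      unfolding pure_decomp_def
    proof (intro conjI allI impI)
      show "\<forall>(p, \<psi>)\<in>set ((w, nv n u w) # ds). 0 \<le> p \<and> unit_vec n \<psi>"
        using ds nv_unit[of n w u] k unfolding pure_decomp_def w_def by (auto intro: sum_nonneg)
    next
      fix i j assume ij: "i < n" "j < n"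
      have "\<rho> $$ (i, j) = \<rho>' $$ (i, j) + u i * cnj (u j)" using ij by (simp add: \<rho>'_def)
      also have "\<rho>' $$ (i, j) = (\<Sum>(p, \<psi>)\<leftarrow>ds. complex_of_real p * \<psi> $ i * cnj (\<psi> $ j))"
        using ds ij unfolding pure_decomp_def by blast
      also have "u i * cnj (u j) = complex_of_real w * nv n u w $ i * cnj (nv n u w $ j)"
        using nv_entry[OF w_def ij] by simp
      finally show "\<rho> $$ (i, j) = (\<Sum>(p, \<psi>)\<leftarrow>(w, nv n u w) # ds. complex_of_real p * \<psi> $ i * cnj (\<psi> $ j))"
        by simp
    qed
    then show ?thesis by blast
  qed
qed

lemma decomp_exists:
  assumes "density_mat n \<rho>"
  shows "\<exists>ds. pure_decomp n \<rho> ds"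
  using chol_ind[of n 0 n \<rho>] density_herm_psd[OF assms] by auto




definition costf :: "nat \<Rightarrow> nat \<Rightarrow> (real \<times> complex vec) list \<Rightarrow> real" where
  "costf dX dY ds = (\<Sum>(p, \<psi>)\<leftarrow>ds. p * vn_entropy (dephase dX dY (proj (dX * dY) \<psi>)))"

lemma coh_form_costf: "coh_form dX dY \<rho> = (INF ds \<in> {ds. pure_decomp (dX * dY) \<rho> ds}. costf dX dY ds)"
  unfolding coh_form_def costf_def ..

lemma cost_wt:
  assumes "0 < dY"
  shows "costf dX dY ds = (\<Sum>(p, \<psi>)\<leftarrow>ds. p * (\<Sum>x<dX. eta (wt dY \<psi> x)))"
  unfolding costf_def using ent_dephase[OF assms] by (simp add: case_prod_beta)

lemma idx_lt: "(x::nat) < X \<Longrightarrow> y < Y \<Longrightarrow> x * Y + y < X * Y"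
proof -
  assume a: "x < X" "y < Y"
  have "x * Y + y < x * Y + Y" using a by simp
  also have "\<dots> = Suc x * Y" by simp
  also have "\<dots> \<le> X * Y" using a by (intro mult_le_mono1) simp
  finally show ?thesis .
qed

lemma wt_nonneg: "0 \<le> wt dY \<psi> x"
  by (simp add: wt_def sum_nonneg)

lemma wt_sum:
  assumes "unit_vec (dX * dY) \<psi>"
  shows "(\<Sum>x<dX. wt dY \<psi> x) = 1"
  using assms unfolding unit_vec_def wt_def by (simp add: sum_prod_split)

lemma wt_le1:
  assumes "unit_vec (dX * dY) \<psi>" "x < dX"
  shows "wt dY \<psi> x \<le> 1"
proof -
  have "wt dY \<psi> x \<le> (\<Sum>x<dX. wt dY \<psi> x)"
    using assms(2) by (intro member_le_sum) (auto simp: wt_nonneg)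
  then show ?thesis using wt_sum[OF assms(1)] by simp
qed

lemma cost_nonneg:
  assumes "0 < dY" "\<forall>(p, \<psi>)\<in>set ds. 0 \<le> p \<and> unit_vec (dX * dY) \<psi>"
  shows "0 \<le> costf dX dY ds"
  unfolding cost_wt[OF assms(1)]
proof (rule sum_list_nonneg)
  fix z assume "z \<in> set (map (\<lambda>(p, \<psi>). p * (\<Sum>x<dX. eta (wt dY \<psi> x))) ds)"
  then obtain p \<psi> where z: "z = p * (\<Sum>x<dX. eta (wt dY \<psi> x))" and m: "(p, \<psi>) \<in> set ds" by auto
  have "0 \<le> p" "unit_vec (dX * dY) \<psi>" using assms(2) m by auto
  then show "0 \<le> z" unfolding z
    by (intro mult_nonneg_nonneg sum_nonneg eta_nonneg wt_nonneg wt_le1) auto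
qed

lemma cost_bdd:
  assumes "0 < dY"
  shows "bdd_below (costf dX dY ` {ds. pure_decomp (dX * dY) \<rho> ds})"
  by (rule bdd_belowI[of _ 0]) (use cost_nonneg[OF assms] in \<open>auto simp: pure_decomp_def\<close>)

lemma gibbs_sum:
  fixes P :: "nat \<Rightarrow> nat \<Rightarrow> real"
  assumes P: "\<And>a b. 0 \<le> P a b" and tot: "(\<Sum>a<m. \<Sum>b<k. P a b) = 1"
  shows "(\<Sum>b<k. (\<Sum>a<m. P a b) * (\<Sum>a<m. eta (P a b / (\<Sum>a<m. P a b)))) \<le> (\<Sum>a<m. eta (\<Sum>b<k. P a b))"
proof -
  define R where "R a = (\<Sum>b<k. P a b)" for a
  define Q where "Q b = (\<Sum>a<m. P a b)" for b
  have R1: "(\<Sum>a<m. R a) = 1" using tot by (simp add: R_def)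
  have Q1: "(\<Sum>b<k. Q b) = 1" using tot by (simp add: Q_def sum.swap[of _ "{..<k}"])
  have PQ: "P a b \<le> Q b" if "a < m" for a b
    unfolding Q_def using that by (intro member_le_sum) (auto simp: P)
  have PR: "P a b \<le> R a" if "b < k" for a b
    unfolding R_def using that by (intro member_le_sum) (auto simp: P)
  have "(\<Sum>b<k. Q b * (\<Sum>a<m. eta (P a b / Q b))) = (\<Sum>b<k. \<Sum>a<m. Q b * eta (P a b / Q b))"
    by (simp add: sum_distrib_left)
  also have "\<dots> \<le> (\<Sum>b<k. \<Sum>a<m. P a b * (- log 2 (R a)) + (Q b * R a - P a b) / ln 2)"
    by (intro sum_mono gibbs_term) (auto simp: P PQ PR)
  also have "\<dots> = (\<Sum>b<k. \<Sum>a<m. P a b * (- log 2 (R a))) + (\<Sum>b<k. \<Sum>a<m. (Q b * R a - P a b) / ln 2)"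
    by (simp only: sum.distrib)
  also have "(\<Sum>b<k. \<Sum>a<m. P a b * (- log 2 (R a))) = (\<Sum>a<m. R a * (- log 2 (R a)))"
    by (subst sum.swap) (simp only: R_def sum_distrib_right)
  also have "(\<Sum>b<k. \<Sum>a<m. (Q b * R a - P a b) / ln 2) = 0"
  proof -
    have "(\<Sum>b<k. \<Sum>a<m. (Q b * R a - P a b) / ln 2) = (\<Sum>b<k. \<Sum>a<m. (Q b * R a - P a b)) / ln 2"
      by (simp only: sum_divide_distrib)
    also have "(\<Sum>b<k. \<Sum>a<m. (Q b * R a - P a b)) = (\<Sum>b<k. Q b * (\<Sum>a<m. R a)) - (\<Sum>b<k. \<Sum>a<m. P a b)"
      by (simp only: sum_subtractf sum_distrib_left)
    also have "\<dots> = 0" using R1 Q1 tot by (simp add: sum.swap[of _ "{..<k}"])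
    finally show ?thesis by simp
  qed
  also have "(\<Sum>a<m. R a * (- log 2 (R a))) + 0 = (\<Sum>a<m. eta (R a))"
  proof -
    have Rnn: "0 \<le> R a" for a unfolding R_def by (intro sum_nonneg) (simp add: P)
    have "R a * (- log 2 (R a)) = eta (R a)" for a
      using Rnn[of a] by (cases "R a = 0") (auto simp: eta_def)
    then show ?thesis by simp
  qed
  finally show ?thesis by (simp add: Q_def R_def)
qed




lemma sum_list_sum_swap:
  "(\<Sum>k\<in>A. sum_list (map (f k) xs)) = sum_list (map (\<lambda>x. \<Sum>k\<in>A. f k x) xs)"
  by (induct xs) (auto simp: sum.distrib)

lemma sum_list_sum_swap2:
  "(\<Sum>k\<in>A. \<Sum>(p, \<psi>)\<leftarrow>xs. f k p \<psi>) = (\<Sum>(p, \<psi>)\<leftarrow>xs. \<Sum>k\<in>A. f k p \<psi>)"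
  by (induct xs) (auto simp: sum.distrib)

lemma sum_list_upt: "sum_list (map f [0..<n]) = (\<Sum>a<n. f a)"
  by (simp add: sum_set_upt_conv_sum_list_nat[symmetric] atLeast0LessThan)

lemma sum_list_concat_map:
  "sum_list (map f (concat (map g xs))) = sum_list (map (\<lambda>x. sum_list (map f (g x))) xs)"
  by (induct xs) auto

definition wA :: "nat \<Rightarrow> nat \<Rightarrow> complex vec \<Rightarrow> nat \<Rightarrow> real" where
  "wA dB dC \<psi> a = wt (dB * dC) \<psi> a"

definition chiBC :: "nat \<Rightarrow> nat \<Rightarrow> complex vec \<Rightarrow> nat \<Rightarrow> complex vec" where
  "chiBC dB dC \<psi> a = nv (dB * dC) (\<lambda>y. \<psi> $ (a * (dB * dC) + y)) (wA dB dC \<psi> a)"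

definition ds1 :: "nat \<Rightarrow> nat \<Rightarrow> nat \<Rightarrow> (real \<times> complex vec) list \<Rightarrow> (real \<times> complex vec) list" where
  "ds1 dA dB dC ds = concat (map (\<lambda>(p, \<psi>). map (\<lambda>a. (p * wA dB dC \<psi> a, chiBC dB dC \<psi> a)) [0..<dA]) ds)"

lemma idx3: "a * (dB * dC) + (b * dC + c) = (a * dB + b) * dC + (c::nat)"
  by (simp add: algebra_simps)

lemma wA_split: "wA dB dC \<psi> a = (\<Sum>b<dB. wt dC \<psi> (a * dB + b))"
  unfolding wA_def wt_def by (subst sum_prod_split) (simp only: idx3)

lemma ds1_decomp:
  assumes pos: "0 < dA" "0 < dB" "0 < dC" and ds: "pure_decomp (dA * dB * dC) \<rho> ds"
  shows "pure_decomp (dB * dC) (ptrace_first dA dB dC \<rho>) (ds1 dA dB dC ds)"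
  unfolding pure_decomp_def
proof (intro conjI allI impI)
  show "\<forall>(p, \<psi>)\<in>set (ds1 dA dB dC ds). 0 \<le> p \<and> unit_vec (dB * dC) \<psi>"
  proof
    fix z assume "z \<in> set (ds1 dA dB dC ds)"
    then obtain p \<psi> a where m: "(p, \<psi>) \<in> set ds" and z: "z = (p * wA dB dC \<psi> a, chiBC dB dC \<psi> a)"
      unfolding ds1_def by auto
    have "0 \<le> p" using ds m unfolding pure_decomp_def by auto
    moreover have "unit_vec (dB * dC) (chiBC dB dC \<psi> a)"
      unfolding chiBC_def using pos by (intro nv_unit) (auto simp: wA_def wt_def)
    ultimately show "case z of (p, \<psi>) \<Rightarrow> 0 \<le> p \<and> unit_vec (dB * dC) \<psi>"
      unfolding z by (auto intro!: mult_nonneg_nonneg simp: wA_def wt_nonneg)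
  qed
next
  fix i j assume i: "i < dB * dC" and j: "j < dB * dC"
  have "ptrace_first dA dB dC \<rho> $$ (i, j) = (\<Sum>k<dA. \<rho> $$ (k * (dB * dC) + i, k * (dB * dC) + j))"
    using i j by (simp add: ptrace_first_def)
  also have "\<dots> = (\<Sum>k<dA. \<Sum>(p, \<psi>)\<leftarrow>ds. complex_of_real p * \<psi> $ (k * (dB * dC) + i) * cnj (\<psi> $ (k * (dB * dC) + j)))"
  proof (intro sum.cong refl)
    fix k assume "k \<in> {..<dA}"
    then have "k * (dB * dC) + i < dA * dB * dC" "k * (dB * dC) + j < dA * dB * dC"
      using idx_lt[of k dA i "dB * dC"] idx_lt[of k dA j "dB * dC"] i j by (auto simp: mult.assoc)
    then show "\<rho> $$ (k * (dB * dC) + i, k * (dB * dC) + j) = (\<Sum>(p, \<psi>)\<leftarrow>ds. complex_of_real p * \<psi> $ (k * (dB * dC) + i) * cnj (\<psi> $ (k * (dB * dC) + j)))"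
      using ds unfolding pure_decomp_def by blast
  qed
  also have "\<dots> = (\<Sum>(p, \<psi>)\<leftarrow>ds. \<Sum>k<dA. complex_of_real p * \<psi> $ (k * (dB * dC) + i) * cnj (\<psi> $ (k * (dB * dC) + j)))"
    by (rule sum_list_sum_swap2)
  also have "\<dots> = (\<Sum>(p, \<psi>)\<leftarrow>ds1 dA dB dC ds. complex_of_real p * \<psi> $ i * cnj (\<psi> $ j))"
    unfolding ds1_def sum_list_concat_map
  proof (intro arg_cong[where f = sum_list] map_cong refl)
    fix d assume "d \<in> set ds"
    obtain p \<psi> where d: "d = (p, \<psi>)" by (cases d)
    have "(\<Sum>k<dA. complex_of_real p * \<psi> $ (k * (dB * dC) + i) * cnj (\<psi> $ (k * (dB * dC) + j)))
        = (\<Sum>k<dA. complex_of_real (p * wA dB dC \<psi> k) * chiBC dB dC \<psi> k $ i * cnj (chiBC dB dC \<psi> k $ j))"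
    proof (intro sum.cong refl)
      fix k
      have "complex_of_real (wA dB dC \<psi> k) * chiBC dB dC \<psi> k $ i * cnj (chiBC dB dC \<psi> k $ j)
          = \<psi> $ (k * (dB * dC) + i) * cnj (\<psi> $ (k * (dB * dC) + j))"
        unfolding chiBC_def by (rule nv_entry[OF _ i j]) (simp add: wA_def wt_def)
      then show "complex_of_real p * \<psi> $ (k * (dB * dC) + i) * cnj (\<psi> $ (k * (dB * dC) + j))
          = complex_of_real (p * wA dB dC \<psi> k) * chiBC dB dC \<psi> k $ i * cnj (chiBC dB dC \<psi> k $ j)"
        by (simp add: algebra_simps)
    qed
    then show "(case d of (p, \<psi>) \<Rightarrow> \<Sum>k<dA. complex_of_real p * \<psi> $ (k * (dB * dC) + i) * cnj (\<psi> $ (k * (dB * dC) + j))) =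
         sum_list (map (\<lambda>(p, \<psi>). complex_of_real p * \<psi> $ i * cnj (\<psi> $ j))
           ((case d of (p, \<psi>) \<Rightarrow> map (\<lambda>a. (p * wA dB dC \<psi> a, chiBC dB dC \<psi> a)) [0..<dA])))"
      unfolding d by (simp add: sum_list_upt comp_def)
  qed
  finally show "ptrace_first dA dB dC \<rho> $$ (i, j) = (\<Sum>(p, \<psi>)\<leftarrow>ds1 dA dB dC ds. complex_of_real p * \<psi> $ i * cnj (\<psi> $ j))" .
qed




lemma chi_wt:
  assumes w: "0 < wA dB dC \<psi> a" and b: "b < dB"
  shows "wt dC (chiBC dB dC \<psi> a) b = wt dC \<psi> (a * dB + b) / wA dB dC \<psi> a"
proof -
  have "wt dC (chiBC dB dC \<psi> a) b = (\<Sum>c<dC. (cmod (\<psi> $ (a * (dB * dC) + (b * dC + c))))\<^sup>2 / wA dB dC \<psi> a)"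
    unfolding wt_def
  proof (intro sum.cong refl)
    fix c assume "c \<in> {..<dC}"
    then have "b * dC + c < dB * dC" using idx_lt[OF b, of c dC] by simp
    then show "(cmod (chiBC dB dC \<psi> a $ (b * dC + c)))\<^sup>2 = (cmod (\<psi> $ (a * (dB * dC) + (b * dC + c))))\<^sup>2 / wA dB dC \<psi> a"
      unfolding chiBC_def by (rule nv_cmod[OF w])
  qed
  also have "\<dots> = wt dC \<psi> (a * dB + b) / wA dB dC \<psi> a"
    unfolding wt_def idx3 by (simp only: sum_divide_distrib)
  finally show ?thesis .
qed

lemma wA_nonneg: "0 \<le> wA dB dC \<psi> a"
  by (simp add: wA_def wt_nonneg)

lemma cost_ds1:
  assumes pos: "0 < dA" "0 < dB" "0 < dC"
  shows "costf (dA * dB) dC ds = costf dA (dB * dC) ds + costf dB dC (ds1 dA dB dC ds)"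
proof -
  have key: "(\<Sum>x<dA * dB. eta (wt dC \<psi> x)) = (\<Sum>a<dA. eta (wA dB dC \<psi> a))
      + (\<Sum>a<dA. wA dB dC \<psi> a * (\<Sum>b<dB. eta (wt dC (chiBC dB dC \<psi> a) b)))" for \<psi>
  proof -
    have "(\<Sum>x<dA * dB. eta (wt dC \<psi> x)) = (\<Sum>a<dA. \<Sum>b<dB. eta (wt dC \<psi> (a * dB + b)))"
      by (rule sum_prod_split)
    also have "\<dots> = (\<Sum>a<dA. eta (wA dB dC \<psi> a) + wA dB dC \<psi> a * (\<Sum>b<dB. eta (wt dC (chiBC dB dC \<psi> a) b)))"
    proof (intro sum.cong refl)
      fix a
      have "(\<Sum>b<dB. eta (wt dC \<psi> (a * dB + b))) = eta (wA dB dC \<psi> a) + wA dB dC \<psi> a * (\<Sum>b<dB. eta (wt dC \<psi> (a * dB + b) / wA dB dC \<psi> a))"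
        unfolding wA_split by (rule eta_split) (simp add: wt_nonneg)
      also have "wA dB dC \<psi> a * (\<Sum>b<dB. eta (wt dC \<psi> (a * dB + b) / wA dB dC \<psi> a))
          = wA dB dC \<psi> a * (\<Sum>b<dB. eta (wt dC (chiBC dB dC \<psi> a) b))"
      proof (cases "wA dB dC \<psi> a = 0")
        case False
        then have w: "0 < wA dB dC \<psi> a" using wA_nonneg[of dB dC \<psi> a] by simp
        show ?thesis by (intro arg_cong[where f = "\<lambda>x. wA dB dC \<psi> a * x"] sum.cong refl) (simp add: chi_wt[OF w])
      qed simp
      finally show "(\<Sum>b<dB. eta (wt dC \<psi> (a * dB + b))) = eta (wA dB dC \<psi> a) + wA dB dC \<psi> a * (\<Sum>b<dB. eta (wt dC (chiBC dB dC \<psi> a) b))" .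
    qed
    also have "\<dots> = (\<Sum>a<dA. eta (wA dB dC \<psi> a)) + (\<Sum>a<dA. wA dB dC \<psi> a * (\<Sum>b<dB. eta (wt dC (chiBC dB dC \<psi> a) b)))"
      by (rule sum.distrib)
    finally show ?thesis .
  qed
  have "costf (dA * dB) dC ds = (\<Sum>(p, \<psi>)\<leftarrow>ds. p * (\<Sum>x<dA * dB. eta (wt dC \<psi> x)))"
    by (rule cost_wt) (use pos in simp)
  also have "\<dots> = (\<Sum>(p, \<psi>)\<leftarrow>ds. p * (\<Sum>a<dA. eta (wt (dB * dC) \<psi> a)) + (\<Sum>a<dA. (p * wA dB dC \<psi> a) * (\<Sum>b<dB. eta (wt dC (chiBC dB dC \<psi> a) b))))"
    by (intro arg_cong[where f = sum_list] map_cong refl)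
       (auto simp: key distrib_left sum_distrib_left mult.assoc wA_def)
  also have "\<dots> = (\<Sum>(p, \<psi>)\<leftarrow>ds. p * (\<Sum>a<dA. eta (wt (dB * dC) \<psi> a))) + (\<Sum>(p, \<psi>)\<leftarrow>ds. (\<Sum>a<dA. (p * wA dB dC \<psi> a) * (\<Sum>b<dB. eta (wt dC (chiBC dB dC \<psi> a) b))))"
    by (simp only: split_def sum_list_addf)
  also have "(\<Sum>(p, \<psi>)\<leftarrow>ds. p * (\<Sum>a<dA. eta (wt (dB * dC) \<psi> a))) = costf dA (dB * dC) ds"
    by (rule cost_wt[symmetric]) (use pos in simp)
  also have "(\<Sum>(p, \<psi>)\<leftarrow>ds. (\<Sum>a<dA. (p * wA dB dC \<psi> a) * (\<Sum>b<dB. eta (wt dC (chiBC dB dC \<psi> a) b)))) = costf dB dC (ds1 dA dB dC ds)"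
    unfolding cost_wt[OF pos(3)] ds1_def sum_list_concat_map
    by (intro arg_cong[where f = sum_list] map_cong refl) (auto simp: sum_list_upt comp_def)
  finally show ?thesis .
qed




definition gidx :: "nat \<Rightarrow> nat \<Rightarrow> nat \<Rightarrow> nat \<Rightarrow> nat" where
  "gidx dB dC b y = ((y div dC) * dB + b) * dC + y mod dC"

definition wB :: "nat \<Rightarrow> nat \<Rightarrow> nat \<Rightarrow> complex vec \<Rightarrow> nat \<Rightarrow> real" where
  "wB dA dB dC \<psi> b = (\<Sum>y<dA * dC. (cmod (\<psi> $ gidx dB dC b y))\<^sup>2)"

definition phiAC :: "nat \<Rightarrow> nat \<Rightarrow> nat \<Rightarrow> complex vec \<Rightarrow> nat \<Rightarrow> complex vec" where
  "phiAC dA dB dC \<psi> b = nv (dA * dC) (\<lambda>y. \<psi> $ gidx dB dC b y) (wB dA dB dC \<psi> b)"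

definition ds2 :: "nat \<Rightarrow> nat \<Rightarrow> nat \<Rightarrow> (real \<times> complex vec) list \<Rightarrow> (real \<times> complex vec) list" where
  "ds2 dA dB dC ds = concat (map (\<lambda>(p, \<psi>). map (\<lambda>b. (p * wB dA dB dC \<psi> b, phiAC dA dB dC \<psi> b)) [0..<dB]) ds)"

lemma gidx_ac: "c < dC \<Longrightarrow> gidx dB dC b (a * dC + c) = (a * dB + b) * dC + c"
  unfolding gidx_def by simp

lemma wB_nonneg: "0 \<le> wB dA dB dC \<psi> b"
  by (simp add: wB_def sum_nonneg)

lemma wB_split: "wB dA dB dC \<psi> b = (\<Sum>a<dA. wt dC \<psi> (a * dB + b))"
  unfolding wB_def wt_def
  by (subst sum_prod_split) (intro sum.cong refl, simp add: gidx_ac)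

lemma phi_wt:
  assumes w: "0 < wB dA dB dC \<psi> b" and a: "a < dA"
  shows "wt dC (phiAC dA dB dC \<psi> b) a = wt dC \<psi> (a * dB + b) / wB dA dB dC \<psi> b"
proof -
  have "wt dC (phiAC dA dB dC \<psi> b) a = (\<Sum>c<dC. (cmod (\<psi> $ ((a * dB + b) * dC + c)))\<^sup>2 / wB dA dB dC \<psi> b)"
    unfolding wt_def
  proof (intro sum.cong refl)
    fix c assume c: "c \<in> {..<dC}"
    then have "a * dC + c < dA * dC" using idx_lt[OF a, of c dC] by simp
    then have "(cmod (phiAC dA dB dC \<psi> b $ (a * dC + c)))\<^sup>2 = (cmod (\<psi> $ gidx dB dC b (a * dC + c)))\<^sup>2 / wB dA dB dC \<psi> b"
      unfolding phiAC_def by (rule nv_cmod[OF w])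
    then show "(cmod (phiAC dA dB dC \<psi> b $ (a * dC + c)))\<^sup>2 = (cmod (\<psi> $ ((a * dB + b) * dC + c)))\<^sup>2 / wB dA dB dC \<psi> b"
      using c by (simp add: gidx_ac)
  qed
  also have "\<dots> = wt dC \<psi> (a * dB + b) / wB dA dB dC \<psi> b"
    unfolding wt_def by (simp only: sum_divide_distrib)
  finally show ?thesis .
qed

lemma gidx_lt:
  assumes "y < dA * dC" "k < dB"
  shows "gidx dB dC k y < dA * dB * dC"
proof -
  have dC: "0 < dC" using assms(1) by (cases dC) auto
  have "y div dC < dA" using assms(1) by (rule div_lt)
  then have "y div dC * dB + k < dA * dB" by (rule idx_lt[OF _ assms(2)])
  then show ?thesis unfolding gidx_def by (rule idx_lt) (use dC in simp)
qed

lemma ds2_decomp: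
  assumes pos: "0 < dA" "0 < dB" "0 < dC" and ds: "pure_decomp (dA * dB * dC) \<rho> ds"
  shows "pure_decomp (dA * dC) (ptrace_mid dA dB dC \<rho>) (ds2 dA dB dC ds)"
  unfolding pure_decomp_def
proof (intro conjI allI impI)
  show "\<forall>(p, \<psi>)\<in>set (ds2 dA dB dC ds). 0 \<le> p \<and> unit_vec (dA * dC) \<psi>"
  proof
    fix z assume "z \<in> set (ds2 dA dB dC ds)"
    then obtain p \<psi> b where m: "(p, \<psi>) \<in> set ds" and z: "z = (p * wB dA dB dC \<psi> b, phiAC dA dB dC \<psi> b)"
      unfolding ds2_def by auto
    have "0 \<le> p" using ds m unfolding pure_decomp_def by auto
    moreover have "unit_vec (dA * dC) (phiAC dA dB dC \<psi> b)"
      unfolding phiAC_def using pos by (intro nv_unit) (auto simp: wB_def)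
    ultimately show "case z of (p, \<psi>) \<Rightarrow> 0 \<le> p \<and> unit_vec (dA * dC) \<psi>"
      unfolding z by (auto intro!: mult_nonneg_nonneg simp: wB_nonneg)
  qed
next
  fix i j assume i: "i < dA * dC" and j: "j < dA * dC"
  have "ptrace_mid dA dB dC \<rho> $$ (i, j) = (\<Sum>k<dB. \<rho> $$ (gidx dB dC k i, gidx dB dC k j))"
    using i j by (simp add: ptrace_mid_def gidx_def)
  also have "\<dots> = (\<Sum>k<dB. \<Sum>(p, \<psi>)\<leftarrow>ds. complex_of_real p * \<psi> $ gidx dB dC k i * cnj (\<psi> $ gidx dB dC k j))"
  proof (intro sum.cong refl)
    fix k assume "k \<in> {..<dB}"
    then have "gidx dB dC k i < dA * dB * dC" "gidx dB dC k j < dA * dB * dC"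
      using gidx_lt[OF i] gidx_lt[OF j] by auto
    then show "\<rho> $$ (gidx dB dC k i, gidx dB dC k j) = (\<Sum>(p, \<psi>)\<leftarrow>ds. complex_of_real p * \<psi> $ gidx dB dC k i * cnj (\<psi> $ gidx dB dC k j))"
      using ds unfolding pure_decomp_def by blast
  qed
  also have "\<dots> = (\<Sum>(p, \<psi>)\<leftarrow>ds. \<Sum>k<dB. complex_of_real p * \<psi> $ gidx dB dC k i * cnj (\<psi> $ gidx dB dC k j))"
    by (rule sum_list_sum_swap2)
  also have "\<dots> = (\<Sum>(p, \<psi>)\<leftarrow>ds2 dA dB dC ds. complex_of_real p * \<psi> $ i * cnj (\<psi> $ j))"
    unfolding ds2_def sum_list_concat_map
  proof (intro arg_cong[where f = sum_list] map_cong refl)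
    fix d assume "d \<in> set ds"
    obtain p \<psi> where d: "d = (p, \<psi>)" by (cases d)
    have "(\<Sum>k<dB. complex_of_real p * \<psi> $ gidx dB dC k i * cnj (\<psi> $ gidx dB dC k j))
        = (\<Sum>k<dB. complex_of_real (p * wB dA dB dC \<psi> k) * phiAC dA dB dC \<psi> k $ i * cnj (phiAC dA dB dC \<psi> k $ j))"
    proof (intro sum.cong refl)
      fix k
      have "complex_of_real (wB dA dB dC \<psi> k) * phiAC dA dB dC \<psi> k $ i * cnj (phiAC dA dB dC \<psi> k $ j)
          = \<psi> $ gidx dB dC k i * cnj (\<psi> $ gidx dB dC k j)"
        unfolding phiAC_def by (rule nv_entry[OF _ i j]) (simp add: wB_def)
      then show "complex_of_real p * \<psi> $ gidx dB dC k i * cnj (\<psi> $ gidx dB dC k j)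
          = complex_of_real (p * wB dA dB dC \<psi> k) * phiAC dA dB dC \<psi> k $ i * cnj (phiAC dA dB dC \<psi> k $ j)"
        by (simp add: algebra_simps)
    qed
    then show "(case d of (p, \<psi>) \<Rightarrow> \<Sum>k<dB. complex_of_real p * \<psi> $ gidx dB dC k i * cnj (\<psi> $ gidx dB dC k j)) =
         sum_list (map (\<lambda>(p, \<psi>). complex_of_real p * \<psi> $ i * cnj (\<psi> $ j))
           ((case d of (p, \<psi>) \<Rightarrow> map (\<lambda>b. (p * wB dA dB dC \<psi> b, phiAC dA dB dC \<psi> b)) [0..<dB])))"
      unfolding d by (simp add: sum_list_upt comp_def)
  qed
  finally show "ptrace_mid dA dB dC \<rho> $$ (i, j) = (\<Sum>(p, \<psi>)\<leftarrow>ds2 dA dB dC ds. complex_of_real p * \<psi> $ i * cnj (\<psi> $ j))" .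
qed

lemma cost_ds2:
  assumes pos: "0 < dA" "0 < dB" "0 < dC"
    and ds: "\<forall>(p, \<psi>)\<in>set ds. 0 \<le> p \<and> unit_vec (dA * dB * dC) \<psi>"
  shows "costf dA dC (ds2 dA dB dC ds) \<le> costf dA (dB * dC) ds"
proof -
  have key: "(\<Sum>b<dB. wB dA dB dC \<psi> b * (\<Sum>a<dA. eta (wt dC (phiAC dA dB dC \<psi> b) a)))
      \<le> (\<Sum>a<dA. eta (wt (dB * dC) \<psi> a))" if u: "unit_vec (dA * dB * dC) \<psi>" for \<psi>
  proof -
    define P where "P a b = wt dC \<psi> (a * dB + b)" for a b
    have "(\<Sum>b<dB. wB dA dB dC \<psi> b * (\<Sum>a<dA. eta (wt dC (phiAC dA dB dC \<psi> b) a)))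
        = (\<Sum>b<dB. (\<Sum>a<dA. P a b) * (\<Sum>a<dA. eta (P a b / (\<Sum>a<dA. P a b))))"
    proof (intro sum.cong refl)
      fix b
      show "wB dA dB dC \<psi> b * (\<Sum>a<dA. eta (wt dC (phiAC dA dB dC \<psi> b) a))
          = (\<Sum>a<dA. P a b) * (\<Sum>a<dA. eta (P a b / (\<Sum>a<dA. P a b)))"
      proof (cases "wB dA dB dC \<psi> b = 0")
        case True
        then show ?thesis by (simp add: wB_split P_def)
      next
        case False
        then have w: "0 < wB dA dB dC \<psi> b" using wB_nonneg[of dA dB dC \<psi> b] by simp
        have "(\<Sum>a<dA. eta (wt dC (phiAC dA dB dC \<psi> b) a)) = (\<Sum>a<dA. eta (P a b / (\<Sum>a<dA. P a b)))"
          by (intro sum.cong refl) (simp add: phi_wt[OF w] P_def wB_split)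
        then show ?thesis by (simp add: wB_split P_def)
      qed
    qed
    also have "\<dots> \<le> (\<Sum>a<dA. eta (\<Sum>b<dB. P a b))"
    proof (rule gibbs_sum)
      show "\<And>a b. 0 \<le> P a b" by (simp add: P_def wt_nonneg)
      have "(\<Sum>a<dA. \<Sum>b<dB. P a b) = (\<Sum>x<dA * dB. wt dC \<psi> x)"
        unfolding P_def by (rule sum_prod_split[symmetric])
      also have "\<dots> = 1" using wt_sum u by blast
      finally show "(\<Sum>a<dA. \<Sum>b<dB. P a b) = 1" .
    qed
    also have "\<dots> = (\<Sum>a<dA. eta (wt (dB * dC) \<psi> a))"
      by (simp add: P_def wA_split[symmetric] wA_def)
    finally show ?thesis .
  qed
  have "costf dA dC (ds2 dA dB dC ds) = (\<Sum>(p, \<psi>)\<leftarrow>ds. p * (\<Sum>b<dB. wB dA dB dC \<psi> b * (\<Sum>a<dA. eta (wt dC (phiAC dA dB dC \<psi> b) a))))"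
    unfolding cost_wt[OF pos(3)] ds2_def sum_list_concat_map
    by (intro arg_cong[where f = sum_list] map_cong refl)
       (auto simp: sum_list_upt comp_def sum_distrib_left mult.assoc)
  also have "\<dots> \<le> (\<Sum>(p, \<psi>)\<leftarrow>ds. p * (\<Sum>a<dA. eta (wt (dB * dC) \<psi> a)))"
  proof (rule sum_list_mono)
    fix d assume "d \<in> set ds"
    then obtain p \<psi> where d: "d = (p, \<psi>)" "0 \<le> p" "unit_vec (dA * dB * dC) \<psi>" using ds by (cases d) auto
    show "(case d of (p, \<psi>) \<Rightarrow> p * (\<Sum>b<dB. wB dA dB dC \<psi> b * (\<Sum>a<dA. eta (wt dC (phiAC dA dB dC \<psi> b) a))))
        \<le> (case d of (p, \<psi>) \<Rightarrow> p * (\<Sum>a<dA. eta (wt (dB * dC) \<psi> a)))"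
      unfolding d(1) using key[OF d(3)] d(2) by (simp add: mult_left_mono)
  qed
  also have "\<dots> = costf dA (dB * dC) ds"
    by (rule cost_wt[symmetric]) (use pos in simp)
  finally show ?thesis .
qed




theorem proposition3:
  fixes dA dB dC :: nat and \<rho> :: "complex mat"
  assumes "density_mat (dA * dB * dC) \<rho>"
  shows "coh_form (dA * dB) dC \<rho>
           \<ge> coh_form dA (dB * dC) \<rho> + coh_form dB dC (ptrace_first dA dB dC \<rho>)
       \<and> coh_form (dA * dB) dC \<rho>
           \<ge> coh_form dA dC (ptrace_mid dA dB dC \<rho>) + coh_form dB dC (ptrace_first dA dB dC \<rho>)"
proof -
  have tr: "(\<Sum>i<dA * dB * dC. \<rho> $$ (i, i)) = 1" using assms unfolding density_mat_def by blast
  have N: "dA * dB * dC \<noteq> 0"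
  proof
    assume z: "dA * dB * dC = 0"
    have "(\<Sum>i<dA * dB * dC. \<rho> $$ (i, i)) = 0" unfolding z by simp
    then show False using tr by simp
  qed
  then have pos: "0 < dA" "0 < dB" "0 < dC" by auto
  define D where "D = {ds. pure_decomp (dA * dB * dC) \<rho> ds}"
  have Dne: "D \<noteq> {}" using decomp_exists[OF assms] unfolding D_def by blast
  have D2: "{ds. pure_decomp (dA * (dB * dC)) \<rho> ds} = D" unfolding D_def by (simp add: mult.assoc)
  have lhs: "coh_form (dA * dB) dC \<rho> = (INF ds \<in> D. costf (dA * dB) dC ds)"
    unfolding coh_form_costf D_def ..
  have units: "\<forall>(p, \<psi>)\<in>set ds. 0 \<le> p \<and> unit_vec (dA * dB * dC) \<psi>" if "ds \<in> D" for ds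
    using that unfolding D_def pure_decomp_def by blast
  have cA: "coh_form dA (dB * dC) \<rho> \<le> costf dA (dB * dC) ds" if "ds \<in> D" for ds
    unfolding coh_form_costf D2
    by (rule cINF_lower[OF _ that]) (use cost_bdd[of "dB * dC" dA \<rho>] pos D2 in simp)
  have cBC: "coh_form dB dC (ptrace_first dA dB dC \<rho>) \<le> costf dB dC (ds1 dA dB dC ds)" if "ds \<in> D" for ds
    unfolding coh_form_costf
    by (rule cINF_lower[OF cost_bdd]) (use pos ds1_decomp[OF pos] that in \<open>auto simp: D_def\<close>)
  have cAC: "coh_form dA dC (ptrace_mid dA dB dC \<rho>) \<le> costf dA dC (ds2 dA dB dC ds)" if "ds \<in> D" for ds
    unfolding coh_form_costf
    by (rule cINF_lower[OF cost_bdd]) (use pos ds2_decomp[OF pos] that in \<open>auto simp: D_def\<close>)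
  have first: "coh_form dA (dB * dC) \<rho> + coh_form dB dC (ptrace_first dA dB dC \<rho>) \<le> coh_form (dA * dB) dC \<rho>"
    unfolding lhs
  proof (rule cINF_greatest[OF Dne])
    fix ds assume ds: "ds \<in> D"
    show "coh_form dA (dB * dC) \<rho> + coh_form dB dC (ptrace_first dA dB dC \<rho>) \<le> costf (dA * dB) dC ds"
      unfolding cost_ds1[OF pos, of ds] using cA[OF ds] cBC[OF ds] by simp
  qed
  have second: "coh_form dA dC (ptrace_mid dA dB dC \<rho>) + coh_form dB dC (ptrace_first dA dB dC \<rho>) \<le> coh_form (dA * dB) dC \<rho>"
    unfolding lhs
  proof (rule cINF_greatest[OF Dne])
    fix ds assume ds: "ds \<in> D"
    have "costf dA dC (ds2 dA dB dC ds) \<le> costf dA (dB * dC) ds" by (rule cost_ds2[OF pos units[OF ds]])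
    then show "coh_form dA dC (ptrace_mid dA dB dC \<rho>) + coh_form dB dC (ptrace_first dA dB dC \<rho>) \<le> costf (dA * dB) dC ds"
      unfolding cost_ds1[OF pos, of ds] using cAC[OF ds] cBC[OF ds] by simp
  qed
  show ?thesis using first second by simp
qed


end
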